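(* Let $d$ and $K$ be positive integers, and let $\mathcal P$ be a set consisting either of a single prime or of infinitely many primes. For $k=1,\ldots,K$ let $\{a_{k,n}\}_{n=1}^\infty$ and $\{b_{k,n}\}_{n=1}^\infty$ be sequences of non-zero integers such that $p\nmid\gcd(a_{k,n},b_{k,n})$ for all $p\in\mathcal P$, $k$ and $n$, and such that the partial sums $\alpha_{k,N}=\sum_{n=1}^N\frac{b_{k,n}}{a_{k,n}}$ converge as $N\to\infty$. Set $a_{0,n}=1$. Suppose that for each $k=1,\ldots,K$ and each $p\in\mathcal P$: for every $N\in\mathbb N$ there is exactly one $n\le N$ with $\nu_p(a_{k,n})=\max_{1\le m\le N}\nu_p(a_{k,m})$, and for all sufficiently large $N$, \[\max_{1\le n\le N}\nu_p(a_{k,n})>d\max_{1\le n\le N}\nu_p(a_{k-1,n}).\] If $\mathcal P=\{p\}$, assume additionally that for each $k=1,\ldots,K$, $\lim_{N\to\infty}\big(\max_{1\le n\le N}\nu_p(a_{k,n})-d\max_{1\le n\le N}\nu_p(a_{k-1,n})\big)=\infty$. Let $P\in\mathbb Z[x_1,\ldots,x_K]$ be a non-zero polynomial of degree at most $d$. Then $P(\alpha_{1,N},\ldots,\alpha_{K,N})\ne0$ for all sufficiently large $N$.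
   Context: $\nu_p$ denotes the $p$-adic valuation. *)

theory Defs
  imports "HOL-Analysis.Analysis" "HOL-Computational_Algebra.Primes"
begin

definition nu :: "nat \<Rightarrow> int \<Rightarrow> nat" where
  "nu p a = multiplicity (int p) a"

definition maxnu :: "nat \<Rightarrow> (nat \<Rightarrow> int) \<Rightarrow> nat \<Rightarrow> nat" where
  "maxnu p a N = Max {nu p (a n) | n. n \<in> {1..N}}"

definition psum :: "(nat \<Rightarrow> int) \<Rightarrow> (nat \<Rightarrow> int) \<Rightarrow> nat \<Rightarrow> real" where
  "psum a b N = (\<Sum>n=1..N. real_of_int (b n) / real_of_int (a n))"

text \<open>Polynomials in Z[x_1,...,x_K] of total degree at most d are represented by their
 coefficient function on exponent vectors e (e i = exponent of x_i); the admissible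
 exponent vectors are those supported on {1..K} with total degree at most d.\<close>
definition exps_deg_le :: "nat \<Rightarrow> nat \<Rightarrow> (nat \<Rightarrow> nat) set" where
  "exps_deg_le K d = {e. (\<forall>i. i \<notin> {1..K} \<longrightarrow> e i = 0) \<and> (\<Sum>i=1..K. e i) \<le> d}"

definition mpoly_eval :: "((nat \<Rightarrow> nat) \<Rightarrow> int) \<Rightarrow> nat \<Rightarrow> (nat \<Rightarrow> real) \<Rightarrow> real" where
  "mpoly_eval c K x = (\<Sum>e\<in>{e. c e \<noteq> 0}. real_of_int (c e) * (\<Prod>i=1..K. x i ^ e i))"

end

theory Submission imports Defs begin

definition vge :: "nat \<Rightarrow> int \<Rightarrow> real \<Rightarrow> bool" where
  "vge p v x \<longleftrightarrow> (\<exists>u w::int. w \<noteq> 0 \<and> \<not> int p dvd w \<and> x = of_int u / of_int w * real p powi v)"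

definition veq :: "nat \<Rightarrow> int \<Rightarrow> real \<Rightarrow> bool" where
  "veq p v x \<longleftrightarrow> (\<exists>u w::int. w \<noteq> 0 \<and> \<not> int p dvd u \<and> \<not> int p dvd w \<and> x = of_int u / of_int w * real p powi v)"

lemma veq_vge: "veq p v x \<Longrightarrow> vge p v x"
  unfolding veq_def vge_def by blast

lemma veq_nz: assumes "prime p" "veq p v x" shows "x \<noteq> 0"
proof -
  obtain u w where uw: "w \<noteq> 0" "\<not> int p dvd u" "\<not> int p dvd w" "x = of_int u / of_int w * real p powi v"
    using assms(2) unfolding veq_def by blast
  have "u \<noteq> 0" using uw(2) by auto
  moreover have "real p \<noteq> 0" using assms(1) prime_gt_1_nat[of p] by simp
  ultimately show ?thesis using uw(1,4) by simp
qed

lemma vge_zero: "prime p \<Longrightarrow> vge p v 0"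
  unfolding vge_def by (rule exI[of _ 0], rule exI[of _ 1]) (auto simp: prime_gt_1_nat)

lemma powi_split:
  assumes "prime p" "v' \<le> v"
  shows "real p powi v = real p ^ nat (v - v') * real p powi v'"
proof -
  have p0: "real p \<noteq> 0" using assms prime_gt_0_nat by simp
  have "real p powi v = real p powi ((v - v') + v')"
    using assms by simp
  also have "\<dots> = real p powi (v - v') * real p powi v'"
    using p0 by (rule power_int_add[OF disjI1])
  also have "real p powi (v - v') = real p powi (int (nat (v - v')))"
    using assms by simp
  also have "\<dots> = real p ^ nat (v - v')" by (rule power_int_of_nat)
  finally show ?thesis .
qed

lemma vge_mono:
  assumes "prime p" "vge p v x" "v' \<le> v"
  shows "vge p v' x"
proof -
  obtain u w where uw: "w \<noteq> 0" "\<not> int p dvd w" "x = of_int u / of_int w * real p powi v"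
    using assms(2) unfolding vge_def by blast
  have "x = of_int (u * int p ^ nat (v - v')) / of_int w * real p powi v'"
    using uw(3) powi_split[OF assms(1,3)] by simp
  then show ?thesis unfolding vge_def using uw(1,2) by blast
qed

lemma vge_add:
  assumes "prime p" "vge p v x" "vge p v y"
  shows "vge p v (x + y)"
proof -
  obtain u w where uw: "w \<noteq> 0" "\<not> int p dvd w" "x = of_int u / of_int w * real p powi v"
    using assms(2) unfolding vge_def by blast
  obtain u' w' where uw': "w' \<noteq> 0" "\<not> int p dvd w'" "y = of_int u' / of_int w' * real p powi v"
    using assms(3) unfolding vge_def by blast
  have pr: "prime (int p)" using assms(1) by simp
  have p1: "p > 1" using assms(1) prime_gt_1_nat by simp
  have "\<not> int p dvd w * w'" using uw uw' pr by (simp add: prime_dvd_mult_iff)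
  moreover have "x + y = of_int (u * w' + u' * w) / of_int (w * w') * real p powi v"
    using uw uw' by (simp add: field_simps)
  ultimately show ?thesis unfolding vge_def using uw uw' by (metis mult_eq_0_iff)
qed

lemma vge_sum:
  assumes "prime p" "finite A" "\<And>i. i \<in> A \<Longrightarrow> vge p v (f i)"
  shows "vge p v (\<Sum>i\<in>A. f i)"
  using assms(2,3) by (induction A rule: finite_induct) (auto intro: vge_add[OF assms(1)] vge_zero[OF assms(1)])

lemma veq_add:
  assumes "prime p" "veq p v x" "vge p (v+1) y"
  shows "veq p v (x + y)"
proof -
  obtain u w where uw: "w \<noteq> 0" "\<not> int p dvd u" "\<not> int p dvd w" "x = of_int u / of_int w * real p powi v"
    using assms(2) unfolding veq_def by blast
  obtain u' w' where uw': "w' \<noteq> 0" "\<not> int p dvd w'" "y = of_int u' / of_int w' * real p powi (v+1)"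
    using assms(3) unfolding vge_def by blast
  have pr: "prime (int p)" using assms(1) by simp
  have p1: "p > 1" using assms(1) prime_gt_1_nat by simp
  have p0: "real p \<noteq> 0" using assms(1) prime_gt_1_nat[of p] by simp
  have "\<not> int p dvd w * w'" using uw uw' pr by (simp add: prime_dvd_mult_iff)
  moreover have "\<not> int p dvd (u * w' + u' * int p * w)"
  proof
    assume "int p dvd (u * w' + u' * int p * w)"
    then have "int p dvd u * w'" by (simp add: dvd_add_left_iff)
    then show False using uw uw' pr by (simp add: prime_dvd_mult_iff)
  qed
  moreover have "x + y = of_int (u * w' + u' * int p * w) / of_int (w * w') * real p powi v"
    using uw uw' p0 by (simp add: field_simps power_int_add)
  ultimately show ?thesis unfolding veq_def using uw uw' by (metis mult_eq_0_iff)
qed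

lemma veq_mult:
  assumes "prime p" "veq p v x" "veq p v' y"
  shows "veq p (v + v') (x * y)"
proof -
  obtain u w where uw: "w \<noteq> 0" "\<not> int p dvd u" "\<not> int p dvd w" "x = of_int u / of_int w * real p powi v"
    using assms(2) unfolding veq_def by blast
  obtain u' w' where uw': "w' \<noteq> 0" "\<not> int p dvd u'" "\<not> int p dvd w'" "y = of_int u' / of_int w' * real p powi v'"
    using assms(3) unfolding veq_def by blast
  have pr: "prime (int p)" using assms(1) by simp
  have p1: "p > 1" using assms(1) prime_gt_1_nat by simp
  have p0: "real p \<noteq> 0" using assms(1) prime_gt_1_nat[of p] by simp
  have "\<not> int p dvd w * w'" "\<not> int p dvd u * u'" using uw uw' pr by (simp_all add: prime_dvd_mult_iff)
  moreover have "x * y = of_int (u * u') / of_int (w * w') * (real p powi v * real p powi v')"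
    using uw uw' by simp
  then have "x * y = of_int (u * u') / of_int (w * w') * real p powi (v + v')"
    using p0 by (simp add: power_int_add)
  ultimately show ?thesis unfolding veq_def using uw uw' by (metis mult_eq_0_iff)
qed

lemma veq_one: "prime p \<Longrightarrow> veq p 0 1"
  unfolding veq_def by (rule exI[of _ 1], rule exI[of _ 1]) (auto simp: prime_gt_1_nat)

lemma veq_power:
  assumes "prime p" "veq p v x"
  shows "veq p (int n * v) (x ^ n)"
proof (induction n)
  case 0 then show ?case by (simp add: veq_one[OF assms(1)])
next
  case (Suc n)
  have "veq p (v + int n * v) (x * x ^ n)" by (rule veq_mult[OF assms(1,2) Suc])
  then show ?case by (simp add: algebra_simps)
qed

lemma veq_prod:
  assumes "prime p" "finite A" "\<And>i. i \<in> A \<Longrightarrow> veq p (v i) (f i)"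
  shows "veq p (\<Sum>i\<in>A. v i) (\<Prod>i\<in>A. f i)"
  using assms(2,3) by (induction A rule: finite_induct) (auto simp: veq_one[OF assms(1)] dest: veq_mult[OF assms(1)])

lemma veq_int:
  assumes "prime p" "c \<noteq> 0"
  shows "veq p (int (multiplicity (int p) c)) (of_int c)"
proof -
  have "\<not> is_unit (int p)" using assms(1) prime_gt_1_nat[of p] by simp
  then obtain y where y: "c = int p ^ multiplicity (int p) c * y" "\<not> int p dvd y"
    using multiplicity_decompose'[OF assms(2)] by metis
  have "real_of_int c = of_int y / of_int 1 * real p powi int (multiplicity (int p) c)"
    by (subst y(1)) simp
  then show ?thesis unfolding veq_def using y(2) by (metis one_neq_zero dvd_1_left prime_nat_int_transfer assms(1) not_prime_unit zdvd1_eq)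
qed

lemma vge_frac:
  assumes "prime p" "a \<noteq> 0"
  shows "vge p (- int (multiplicity (int p) a)) (of_int b / of_int a)"
proof -
  have "\<not> is_unit (int p)" using assms(1) prime_gt_1_nat[of p] by simp
  then obtain y where y: "a = int p ^ multiplicity (int p) a * y" "\<not> int p dvd y"
    using multiplicity_decompose'[OF assms(2)] by metis
  have p0: "real p \<noteq> 0" using assms(1) prime_gt_1_nat[of p] by simp
  have "real_of_int b / of_int a = of_int b / of_int y * real p powi (- int (multiplicity (int p) a))"
    using y(1) p0 by (simp add: power_int_minus field_simps)
      (metis of_int_mult of_int_power of_int_of_nat_eq)
  moreover have "y \<noteq> 0" using y assms(2) by auto
  ultimately show ?thesis unfolding vge_def using y(2) by blast
qed

lemma veq_frac:
  assumes "prime p" "a \<noteq> 0" "\<not> int p dvd b"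
  shows "veq p (- int (multiplicity (int p) a)) (of_int b / of_int a)"
proof -
  have "\<not> is_unit (int p)" using assms(1) prime_gt_1_nat[of p] by simp
  then obtain y where y: "a = int p ^ multiplicity (int p) a * y" "\<not> int p dvd y"
    using multiplicity_decompose'[OF assms(2)] by metis
  have p0: "real p \<noteq> 0" using assms(1) prime_gt_1_nat[of p] by simp
  have "real_of_int b / of_int a = of_int b / of_int y * real p powi (- int (multiplicity (int p) a))"
    using y(1) p0 by (simp add: power_int_minus field_simps)
      (metis of_int_mult of_int_power of_int_of_nat_eq)
  moreover have "y \<noteq> 0" using y assms(2) by auto
  ultimately show ?thesis unfolding veq_def using y(2) assms(3) by blast
qed


lemma exps_finite: "finite (exps_deg_le K d)"
proof -
  have "exps_deg_le K d \<subseteq> {f. \<forall>x. (x \<in> {1..K} \<longrightarrow> f x \<in> {0..d}) \<and> (x \<notin> {1..K} \<longrightarrow> f x = 0)}"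
  proof (safe)
    fix e x assume e: "e \<in> exps_deg_le K d" and x: "x \<in> {1..K}"
    have "e x \<le> (\<Sum>i=1..K. e i)" using x by (intro member_le_sum) auto
    then show "e x \<in> {0..d}" using e unfolding exps_deg_le_def by auto
  next
    fix e x assume e: "e \<in> exps_deg_le K d" and x: "x \<notin> {1..K}"
    then show "e x = 0" unfolding exps_deg_le_def by auto
  qed
  moreover have "finite {f. \<forall>x. (x \<in> {1..K} \<longrightarrow> f x \<in> {0..d}) \<and> (x \<notin> {1..K} \<longrightarrow> f x = (0::nat))}"
    by (rule finite_set_of_finite_funs) auto
  ultimately show ?thesis by (rule finite_subset)
qed

lemma alpha_veq:
  fixes a b :: "nat \<Rightarrow> int"
  assumes p: "prime p" and N: "N \<ge> 1"
    and nz: "\<forall>n\<in>{1..N}. a n \<noteq> 0"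
    and cop: "\<forall>n\<in>{1..N}. \<not> int p dvd gcd (a n) (b n)"
    and u: "\<exists>!n. n \<in> {1..N} \<and> nu p (a n) = maxnu p a N"
    and M1: "maxnu p a N \<ge> 1"
  shows "veq p (- int (maxnu p a N)) (psum a b N)"
proof -
  define M where "M = maxnu p a N"
  obtain n0 where n0: "n0 \<in> {1..N}" "nu p (a n0) = M"
    and un: "\<And>n. n \<in> {1..N} \<Longrightarrow> nu p (a n) = M \<Longrightarrow> n = n0"
    using u unfolding M_def by blast
  have fin: "finite {nu p (a n) | n. n \<in> {1..N}}" by simp
  have le: "nu p (a n) \<le> M" if "n \<in> {1..N}" for n
    unfolding M_def maxnu_def by (rule Max_ge[OF fin]) (use that in blast)
  have "psum a b N = of_int (b n0) / of_int (a n0) + (\<Sum>n\<in>{1..N}-{n0}. of_int (b n) / of_int (a n))"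
    unfolding psum_def using n0(1) by (simp add: sum.remove)
  moreover have "veq p (- int M) (of_int (b n0) / of_int (a n0))"
  proof -
    have "int p ^ 1 dvd a n0" using n0 M1 unfolding M_def nu_def by (intro multiplicity_dvd') simp
    then have "\<not> int p dvd b n0" using cop n0(1) by auto
    then show ?thesis using veq_frac[OF p, of "a n0" "b n0"] nz n0 unfolding nu_def by auto
  qed
  moreover have "vge p (- int M + 1) (\<Sum>n\<in>{1..N}-{n0}. of_int (b n) / of_int (a n))"
  proof (rule vge_sum[OF p], simp)
    fix n assume n: "n \<in> {1..N}-{n0}"
    have "nu p (a n) < M" using le[of n] un[of n] n by force
    then show "vge p (- int M + 1) (of_int (b n) / of_int (a n))"
      using vge_mono[OF p vge_frac[OF p, of "a n" "b n"]] nz n unfolding nu_def by auto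
  qed
  ultimately show ?thesis unfolding M_def[symmetric] by (simp add: veq_add[OF p])
qed

lemma sep:
  fixes e e' M :: "nat \<Rightarrow> nat"
  assumes j: "j \<in> {1..K}" and lt: "e' j < e j" and eq: "\<forall>i\<in>{j<..K}. e i = e' i"
    and deg: "(\<Sum>i=1..K. e' i) \<le> d" and Mle: "\<forall>i\<in>{1..<j}. M i \<le> M (j-1)"
  shows "int (M j) - int d * int (M (j-1)) \<le>
         (\<Sum>i=1..K. int (e i) * int (M i)) - (\<Sum>i=1..K. int (e' i) * int (M i))"
proof -
  define g where "g i = (int (e i) - int (e' i)) * int (M i)" for i
  have split: "{1..K} = {1..<j} \<union> ({j} \<union> {j<..K})" "{1..<j} \<inter> ({j} \<union> {j<..K}) = {}" "j \<notin> {j<..K}"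
    using j by auto
  have "(\<Sum>i=1..K. int (e i) * int (M i)) - (\<Sum>i=1..K. int (e' i) * int (M i)) = (\<Sum>i=1..K. g i)"
    unfolding g_def by (simp add: sum_subtractf algebra_simps)
  also have "\<dots> = (\<Sum>i\<in>{1..<j}. g i) + g j + (\<Sum>i\<in>{j<..K}. g i)"
    by (subst split(1), subst sum.union_disjoint) (use split in auto)
  also have "(\<Sum>i\<in>{j<..K}. g i) = 0" using eq unfolding g_def by simp
  finally have A: "(\<Sum>i=1..K. int (e i) * int (M i)) - (\<Sum>i=1..K. int (e' i) * int (M i))
      = (\<Sum>i\<in>{1..<j}. g i) + g j" by simp
  have "g j \<ge> int (M j)" unfolding g_def using mult_right_mono[of 1 "int (e j) - int (e' j)" "int (M j)"] lt by simp
  moreover have "(\<Sum>i\<in>{1..<j}. g i) \<ge> - (int d * int (M (j-1)))"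
  proof -
    have "(\<Sum>i\<in>{1..<j}. g i) \<ge> (\<Sum>i\<in>{1..<j}. - (int (e' i) * int (M (j-1))))"
    proof (rule sum_mono)
      fix i assume i: "i \<in> {1..<j}"
      have "int (e' i) * int (M i) \<le> int (e' i) * int (M (j-1))"
        using Mle i by (simp add: mult_left_mono)
      moreover have "0 \<le> int (e i) * int (M i)" by simp
      moreover have "g i = int (e i) * int (M i) - int (e' i) * int (M i)"
        unfolding g_def by (simp add: left_diff_distrib)
      ultimately show "- (int (e' i) * int (M (j-1))) \<le> g i" by linarith
    qed
    moreover have "(\<Sum>i\<in>{1..<j}. int (e' i)) \<le> int d"
    proof -
      have "(\<Sum>i\<in>{1..<j}. e' i) \<le> (\<Sum>i=1..K. e' i)" using j by (intro sum_mono2) auto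
      then show ?thesis using deg by (simp flip: of_nat_sum)
    qed
    then have "(\<Sum>i\<in>{1..<j}. int (e' i)) * int (M (j-1)) \<le> int d * int (M (j-1))"
      by (simp add: mult_right_mono)
    ultimately show ?thesis by (simp add: sum_negf sum_distrib_right)
  qed
  ultimately show ?thesis using A by linarith
qed


theorem lemma9:
  fixes d K :: nat
    and PP :: "nat set"
    and a b :: "nat \<Rightarrow> nat \<Rightarrow> int"
    and c :: "(nat \<Rightarrow> nat) \<Rightarrow> int"
  assumes "d > 0" and "K > 0"
    and PP: "(\<exists>p. prime p \<and> PP = {p}) \<or> (infinite PP \<and> (\<forall>p\<in>PP. prime p))"
    and nz: "\<forall>k\<in>{1..K}. \<forall>n\<ge>1. a k n \<noteq> 0 \<and> b k n \<noteq> 0"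
    and cop: "\<forall>p\<in>PP. \<forall>k\<in>{1..K}. \<forall>n\<ge>1. \<not> (int p dvd gcd (a k n) (b k n))"
    and conv: "\<forall>k\<in>{1..K}. convergent (\<lambda>N. psum (a k) (b k) N)"
    and a0: "\<forall>n. a 0 n = 1"
    and uniq: "\<forall>k\<in>{1..K}. \<forall>p\<in>PP. \<forall>N\<ge>1.
                 \<exists>!n. n \<in> {1..N} \<and> nu p (a k n) = maxnu p (a k) N"
    and grow: "\<forall>k\<in>{1..K}. \<forall>p\<in>PP.
                 eventually (\<lambda>N. maxnu p (a k) N > d * maxnu p (a (k-1)) N) sequentially"
    and single: "\<forall>p. PP = {p} \<longrightarrow> (\<forall>k\<in>{1..K}.
                 filterlim (\<lambda>N. real (maxnu p (a k) N) - real d * real (maxnu p (a (k-1)) N))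
                   at_top sequentially)"
    and cdeg: "\<forall>e. c e \<noteq> 0 \<longrightarrow> e \<in> exps_deg_le K d"
    and cnz: "\<exists>e. c e \<noteq> 0"
  shows "eventually (\<lambda>N. mpoly_eval c K (\<lambda>k. psum (a k) (b k) N) \<noteq> 0) sequentially"
proof -
  define S where "S = {e. c e \<noteq> 0}"
  have finS: "finite S" unfolding S_def using cdeg exps_finite[of K d]
    by (metis (mono_tags, lifting) mem_Collect_eq rev_finite_subset subsetI)
  have Sne: "S \<noteq> {}" using cnz unfolding S_def by auto
  have Ssupp: "\<And>e i. e \<in> S \<Longrightarrow> i \<notin> {1..K} \<Longrightarrow> e i = 0"
    using cdeg unfolding S_def exps_deg_le_def by auto
  have Sdeg: "\<And>e. e \<in> S \<Longrightarrow> (\<Sum>i=1..K. e i) \<le> d"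
    using cdeg unfolding S_def exps_deg_le_def by auto
  obtain p C where p: "prime p" "p \<in> PP" and Cb: "\<forall>e\<in>S. nu p (c e) \<le> C"
    and ev: "\<forall>k\<in>{1..K}. eventually (\<lambda>N. real C < real (maxnu p (a k) N) - real d * real (maxnu p (a (k-1)) N)) sequentially"
  proof (cases "\<exists>p. prime p \<and> PP = {p}")
    case True
    then obtain p where p: "prime p" "PP = {p}" by blast
    define C where "C = Max ((\<lambda>e. nu p (c e)) ` S)"
    have "\<forall>e\<in>S. nu p (c e) \<le> C" unfolding C_def using finS by auto
    moreover have "\<forall>k\<in>{1..K}. eventually (\<lambda>N. real C < real (maxnu p (a k) N) - real d * real (maxnu p (a (k-1)) N)) sequentially"
      using single p(2) unfolding filterlim_at_top_dense by blast
    ultimately show ?thesis using that p by blast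
  next
    case False
    then have inf: "infinite PP" and pr: "\<forall>p\<in>PP. prime p" using PP by auto
    define B where "B = Max ((\<lambda>e. nat \<bar>c e\<bar>) ` S)"
    obtain p where pB: "p > B" "p \<in> PP" using inf unfolding infinite_nat_iff_unbounded by blast
    have "\<forall>e\<in>S. nu p (c e) \<le> 0"
    proof
      fix e assume e: "e \<in> S"
      have "nat \<bar>c e\<bar> \<le> B" unfolding B_def using finS e by auto
      then have lt: "\<bar>c e\<bar> < int p" using pB by linarith
      have "\<not> int p dvd c e"
      proof
        assume "int p dvd c e"
        then have "\<bar>int p\<bar> \<le> \<bar>c e\<bar>" using e unfolding S_def by (intro dvd_imp_le_int) auto
        then show False using lt by simp
      qed
      then show "nu p (c e) \<le> 0" unfolding nu_def by (simp add: not_dvd_imp_multiplicity_0)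
    qed
    moreover have "\<forall>k\<in>{1..K}. eventually (\<lambda>N. real 0 < real (maxnu p (a k) N) - real d * real (maxnu p (a (k-1)) N)) sequentially"
    proof
      fix k assume k: "k \<in> {1..K}"
      show "eventually (\<lambda>N. real 0 < real (maxnu p (a k) N) - real d * real (maxnu p (a (k-1)) N)) sequentially"
        using grow k pB(2) by (auto elim!: eventually_mono simp flip: of_nat_mult)
    qed
    ultimately show ?thesis using that pr pB(2) by blast
  qed
  have ev2: "eventually (\<lambda>N. N \<ge> 1 \<and> (\<forall>k\<in>{1..K}. d * maxnu p (a (k-1)) N < maxnu p (a k) N \<and>
      real C < real (maxnu p (a k) N) - real d * real (maxnu p (a (k-1)) N))) sequentially"
    using grow p(2) ev
    by (intro eventually_conj eventually_ball_finite ballI) (auto simp: eventually_ge_at_top)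
  show ?thesis
    using ev2
  proof (rule eventually_mono)
    fix N assume H: "N \<ge> 1 \<and> (\<forall>k\<in>{1..K}. d * maxnu p (a (k-1)) N < maxnu p (a k) N \<and>
      real C < real (maxnu p (a k) N) - real d * real (maxnu p (a (k-1)) N))"
    define M where "M k = maxnu p (a k) N" for k
    have N1: "N \<ge> 1" using H by blast
    have step: "\<And>k. k \<in> {1..K} \<Longrightarrow> d * M (k-1) < M k" using H unfolding M_def by blast
    have gap: "\<And>k. k \<in> {1..K} \<Longrightarrow> int C < int (M k) - int d * int (M (k-1))"
    proof -
      fix k assume "k \<in> {1..K}"
      then have "real C < real (M k) - real d * real (M (k-1))" using H unfolding M_def by blast
      then have "real (C + d * M (k-1)) < real (M k)" by simp
      then have "C + d * M (k-1) < M k" by (simp only: of_nat_less_iff)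
      moreover have "int (d * M (k-1)) = int d * int (M (k-1))" by simp
      ultimately show "int C < int (M k) - int d * int (M (k-1))" by linarith
    qed
    have step2: "\<And>k. k \<in> {1..K} \<Longrightarrow> M (k-1) < M k"
    proof -
      fix k assume k: "k \<in> {1..K}"
      have "M (k-1) \<le> d * M (k-1)" using \<open>d > 0\<close> by simp
      then show "M (k-1) < M k" using step[OF k] by linarith
    qed
    have Mmono: "\<And>i j. i \<le> j \<Longrightarrow> j \<le> K \<Longrightarrow> M i \<le> M j"
    proof -
      fix i j :: nat
      show "i \<le> j \<Longrightarrow> j \<le> K \<Longrightarrow> M i \<le> M j"
      proof (induction j)
        case 0 then show ?case by simp
      next
        case (Suc j)
        show ?case
        proof (cases "i = Suc j")
          case True then show ?thesis by simp
        next
          case False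
          then have "M i \<le> M j" using Suc by simp
          moreover have "M j < M (Suc j)" using step2[of "Suc j"] Suc.prems by simp
          ultimately show ?thesis by simp
        qed
      qed
    qed
    have Mge1: "M k \<ge> 1" if k: "k \<in> {1..K}" for k
      using step2[OF k] by simp
    have alpha: "\<And>k. k \<in> {1..K} \<Longrightarrow> veq p (- int (M k)) (psum (a k) (b k) N)"
    proof -
      fix k assume k: "k \<in> {1..K}"
      show "veq p (- int (M k)) (psum (a k) (b k) N)"
        unfolding M_def
        by (rule alpha_veq[OF p(1) N1]) (use nz cop uniq k p(2) N1 Mge1[OF k] in \<open>auto simp: M_def\<close>)
    qed
    define f where "f e = int (nu p (c e)) - (\<Sum>i=1..K. int (e i) * int (M i))" for e
    define T where "T e = real_of_int (c e) * (\<Prod>i=1..K. psum (a i) (b i) N ^ e i)" for e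
    have Tv: "\<And>e. e \<in> S \<Longrightarrow> veq p (f e) (T e)"
    proof -
      fix e assume e: "e \<in> S"
      have "veq p (\<Sum>i=1..K. int (e i) * (- int (M i))) (\<Prod>i=1..K. psum (a i) (b i) N ^ e i)"
        by (rule veq_prod[OF p(1)], simp, rule veq_power[OF p(1)], rule alpha, simp)
      then have "veq p (int (multiplicity (int p) (c e)) + (\<Sum>i=1..K. int (e i) * (- int (M i)))) (T e)"
        unfolding T_def using e unfolding S_def by (intro veq_mult[OF p(1)] veq_int[OF p(1)]) auto
      moreover have "int (multiplicity (int p) (c e)) + (\<Sum>i=1..K. int (e i) * (- int (M i))) = f e"
        unfolding f_def nu_def by (simp add: sum_negf)
      ultimately show "veq p (f e) (T e)" by simp
    qed
    have sepS: "f e < f e'" if e: "e \<in> S" and e': "e' \<in> S" and j: "j \<in> {1..K}" and lt: "e' j < e j"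
      and eq: "\<forall>i\<in>{j<..K}. e i = e' i" for e e' j
    proof -
      have "int (M j) - int d * int (M (j-1)) \<le>
         (\<Sum>i=1..K. int (e i) * int (M i)) - (\<Sum>i=1..K. int (e' i) * int (M i))"
        by (rule sep[OF j lt eq Sdeg[OF e']]) (use Mmono j in auto)
      moreover have "int C < int (M j) - int d * int (M (j-1))" using gap[OF j] .
      moreover have "nu p (c e) \<le> C" using Cb e by blast
      ultimately show ?thesis unfolding f_def by linarith
    qed
    have sepd: "f e \<noteq> f e'" if e: "e \<in> S" and e': "e' \<in> S" and ne: "e \<noteq> e'" for e e'
    proof -
      obtain i where i: "e i \<noteq> e' i" using ne by blast
      define D where "D = {i\<in>{1..K}. e i \<noteq> e' i}"
      have iD: "i \<in> D" using i Ssupp[OF e, of i] Ssupp[OF e', of i] unfolding D_def by (cases "i \<in> {1..K}") auto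
      have finD: "finite D" unfolding D_def by simp
      define j where "j = Max D"
      have jD: "j \<in> D" unfolding j_def using finD iD by (intro Max_in) auto
      have eq: "\<forall>l\<in>{j<..K}. e l = e' l"
      proof
        fix l assume l: "l \<in> {j<..K}"
        show "e l = e' l"
        proof (rule ccontr)
          assume "e l \<noteq> e' l"
          then have "l \<in> D" using l jD unfolding D_def by auto
          then have "l \<le> j" unfolding j_def using finD by simp
          then show False using l by simp
        qed
      qed
      have j: "j \<in> {1..K}" "e j \<noteq> e' j" using jD unfolding D_def by auto
      show ?thesis
      proof (cases "e' j < e j")
        case True then show ?thesis using sepS[OF e e' j(1) True eq] by simp
      next
        case False
        then have "e j < e' j" using j(2) by simp
        moreover have "\<forall>l\<in>{j<..K}. e' l = e l" using eq by simp
        ultimately show ?thesis using sepS[OF e' e j(1)] by simp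
      qed
    qed
    define m where "m = Min (f ` S)"
    have "m \<in> f ` S" unfolding m_def using finS Sne by (intro Min_in) auto
    then obtain e0 where e0: "e0 \<in> S" "f e0 = m" by blast
    have fge: "\<And>e. e \<in> S \<Longrightarrow> m \<le> f e" unfolding m_def using finS by simp
    have "mpoly_eval c K (\<lambda>k. psum (a k) (b k) N) = (\<Sum>e\<in>S. T e)"
      unfolding mpoly_eval_def S_def T_def by simp
    also have "\<dots> = T e0 + (\<Sum>e\<in>S-{e0}. T e)" using finS e0(1) by (simp add: sum.remove)
    finally have eqs: "mpoly_eval c K (\<lambda>k. psum (a k) (b k) N) = T e0 + (\<Sum>e\<in>S-{e0}. T e)" .
    have "vge p (f e0 + 1) (\<Sum>e\<in>S-{e0}. T e)"
    proof (rule vge_sum[OF p(1)])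
      show "finite (S - {e0})" using finS by simp
    next
      fix e assume e: "e \<in> S - {e0}"
      have "f e \<noteq> f e0" using sepd[of e e0] e e0 by auto
      then have "f e0 + 1 \<le> f e" using fge[of e] e e0 by simp
      then show "vge p (f e0 + 1) (T e)" using vge_mono[OF p(1) veq_vge[OF Tv]] e by blast
    qed
    then have "veq p (f e0) (T e0 + (\<Sum>e\<in>S-{e0}. T e))"
      by (rule veq_add[OF p(1) Tv[OF e0(1)]])
    then show "mpoly_eval c K (\<lambda>k. psum (a k) (b k) N) \<noteq> 0"
      unfolding eqs by (rule veq_nz[OF p(1)])
  qed
qed

end
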